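(* Suppose $z^\star=(v^\star,\lambda^\star,\mu^\star)$ is a fixed point of the SQP-type iteration $z_{k+1}=\pi(z_k)$ and that the second-order sufficient conditions (SOSC), the linear independence constraint qualification (LICQ) and strict complementarity hold at $z^\star$ with respect to the QP subproblem (defined below) with $z_k=z^\star$. Then, in a neighborhood of $z^\star$, the iteration map $z_{k+1}=\pi(z_k)$ is given by the solution to the parametric root-finding problem $R(z;z_k)=0$ with the residual \[ R(z;\bar z)=\begin{bmatrix} W(\bar z)(v-\bar v)+q(\bar z)+\tilde G(\bar v)\tilde\lambda \\ \tilde g(\bar v)+\tilde G(\bar v)^{\top}(v-\bar v)\end{bmatrix}, \] where $\tilde g(v)=(g(v),h_{\mathcal A}(v))$ and $\tilde G(\bar v)=(G(\bar v),H_{\mathcal A}(\bar v))$ collect the equality constraints and the strictly active inequality constraints (index set $\mathcal A$), with associated multipliers $\tilde\lambda=(\lambda,\mu_{\mathcal A})$. Furthermore, the map $\pi$ is differentiable in a neighborhood of $z^\star$.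
   Context: Consider the NLP $\min_{v\in\mathbb R^{n_v}} f(v)$ s.t. $g(v)=0$, $h(v)\le 0$, with $f,g,h$ twice continuously differentiable, and Lagrangian $\mathcal L(v,\lambda,\mu)=f(v)+\lambda^\top g(v)+\mu^\top h(v)$. For a primal-dual iterate $z_k=(v_k,\lambda_k,\mu_k)$, the QP subproblem is $\min_v \tfrac12 (v-v_k)^\top W(z_k)(v-v_k)+q(z_k)^\top(v-v_k)$ s.t. $g(v_k)+G(v_k)^\top(v-v_k)=0$, $h(v_k)+H(v_k)^\top(v-v_k)\le 0$, where $W(z)\succeq 0$ approximates $\nabla_v^2\mathcal L$, and $q(z)\approx\nabla f(v)$ (possibly depending on the dual iterates), $G(v)\approx\nabla g(v)$, $H(v)\approx\nabla h(v)$ are possibly inexact first-order derivatives. The SQP-type iteration is $z_{k+1}=\pi(z_k)$, where $\pi(z_k)$ is the primal-dual solution of this QP, i.e. $z_{k+1}$ satisfies its KKT conditions. *)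

theory Defs
  imports "HOL-Analysis.Analysis"
begin

text \<open>Primal-dual iterates z = (v, lambda, mu) :: real^'n * real^'m * real^'p.
  G v is the n_v x n_g matrix approximating the gradient of g (columns = constraint
  gradients), H v the n_v x n_h matrix approximating the gradient of h.\<close>

type_synonym ('n,'m,'p) pd = "(real^'n) \<times> (real^'m) \<times> (real^'p)"

definition pv :: "('n::finite,'m::finite,'p::finite) pd \<Rightarrow> real^'n" where
  "pv z = fst z"
definition plam :: "('n::finite,'m::finite,'p::finite) pd \<Rightarrow> real^'m" where
  "plam z = fst (snd z)"
definition pmu :: "('n::finite,'m::finite,'p::finite) pd \<Rightarrow> real^'p" where
  "pmu z = snd (snd z)"

definition C1_map :: "('a::real_normed_vector \<Rightarrow> 'b::real_normed_vector) \<Rightarrow> bool" where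
  "C1_map f \<longleftrightarrow> (\<exists>f'. (\<forall>x. (f has_derivative blinfun_apply (f' x)) (at x)) \<and> continuous_on UNIV f')"

definition C2_map :: "('a::real_normed_vector \<Rightarrow> 'b::real_normed_vector) \<Rightarrow> bool" where
  "C2_map f \<longleftrightarrow> (\<exists>f'. (\<forall>x. (f has_derivative blinfun_apply (f' x)) (at x)) \<and> C1_map f')"

definition qp_kkt ::
  "(('n::finite,'m::finite,'p::finite) pd \<Rightarrow> real^'n^'n) \<Rightarrow> (('n,'m,'p) pd \<Rightarrow> real^'n)
   \<Rightarrow> (real^'n \<Rightarrow> real^'m) \<Rightarrow> (real^'n \<Rightarrow> real^'p)
   \<Rightarrow> (real^'n \<Rightarrow> real^'m^'n) \<Rightarrow> (real^'n \<Rightarrow> real^'p^'n)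
   \<Rightarrow> ('n,'m,'p) pd \<Rightarrow> ('n,'m,'p) pd \<Rightarrow> bool" where
  "qp_kkt W q g h G H zb z \<longleftrightarrow>
     (let vb = pv zb; d = pv z - vb; hl = h vb + transpose (H vb) *v d in
       W zb *v d + q zb + G vb *v plam z + H vb *v pmu z = 0
     \<and> g vb + transpose (G vb) *v d = 0
     \<and> (\<forall>i. hl $ i \<le> 0)
     \<and> (\<forall>i. pmu z $ i \<ge> 0)
     \<and> (\<forall>i. pmu z $ i * hl $ i = 0))"

definition residual_zero ::
  "'p set \<Rightarrow> (('n::finite,'m::finite,'p::finite) pd \<Rightarrow> real^'n^'n) \<Rightarrow> (('n,'m,'p) pd \<Rightarrow> real^'n)
   \<Rightarrow> (real^'n \<Rightarrow> real^'m) \<Rightarrow> (real^'n \<Rightarrow> real^'p)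
   \<Rightarrow> (real^'n \<Rightarrow> real^'m^'n) \<Rightarrow> (real^'n \<Rightarrow> real^'p^'n)
   \<Rightarrow> ('n,'m,'p) pd \<Rightarrow> ('n,'m,'p) pd \<Rightarrow> bool" where
  "residual_zero A W q g h G H zb z \<longleftrightarrow>
     (let vb = pv zb; d = pv z - vb in
       W zb *v d + q zb + G vb *v plam z + (\<Sum>i\<in>A. pmu z $ i *\<^sub>R column i (H vb)) = 0
     \<and> g vb + transpose (G vb) *v d = 0
     \<and> (\<forall>i\<in>A. (h vb + transpose (H vb) *v d) $ i = 0))"

end

theory Submission
  imports Defs
begin


definition Lf :: "'p set \<Rightarrow> (('n::finite,'m::finite,'p::finite) pd \<Rightarrow> real^'n^'n)
   \<Rightarrow> (real^'n \<Rightarrow> real^'m^'n) \<Rightarrow> (real^'n \<Rightarrow> real^'p^'n)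
   \<Rightarrow> ('n,'m,'p) pd \<Rightarrow> ('n,'m,'p) pd \<Rightarrow> ('n,'m,'p) pd" where
  "Lf A W G H x y = (W x *v pv y + G (pv x) *v plam y + (\<Sum>i\<in>A. pmu y $ i *\<^sub>R column i (H (pv x))),
      transpose (G (pv x)) *v pv y,
      \<chi> i. if i \<in> A then (transpose (H (pv x)) *v pv y) $ i else pmu y $ i)"

definition bf :: "'p set \<Rightarrow> (('n::finite,'m::finite,'p::finite) pd \<Rightarrow> real^'n)
   \<Rightarrow> (real^'n \<Rightarrow> real^'m) \<Rightarrow> (real^'n \<Rightarrow> real^'p) \<Rightarrow> ('n,'m,'p) pd \<Rightarrow> ('n,'m,'p) pd" where
  "bf A q g h x = (- q x, - g (pv x), \<chi> i. if i \<in> A then - h (pv x) $ i else 0)"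

lemma pd_eq: "(z::('n::finite,'m::finite,'p::finite) pd) = z' \<longleftrightarrow> pv z = pv z' \<and> plam z = plam z' \<and> pmu z = pmu z'"
  by (cases z; cases z') (auto simp: pv_def plam_def pmu_def)

lemma pd_simps[simp]: "pv (a,b,c) = a" "plam (a,b,c) = b" "pmu (a,b,c) = c"
  "pv (z + z') = pv z + pv z'" "plam (z + z') = plam z + plam z'" "pmu (z + z') = pmu z + pmu z'"
  "pv (z - z') = pv z - pv z'" "plam (z - z') = plam z - plam z'" "pmu (z - z') = pmu z - pmu z'"
  "pv (r *\<^sub>R z) = r *\<^sub>R pv z" "plam (r *\<^sub>R z) = r *\<^sub>R plam z" "pmu (r *\<^sub>R z) = r *\<^sub>R pmu z"
  "pv 0 = 0" "plam 0 = 0" "pmu 0 = 0"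
  by (auto simp: pv_def plam_def pmu_def)

lemma Lf_linear: "linear (Lf A W G H x)"
  apply (rule linearI)
  apply (simp_all add: Lf_def pd_eq matrix_vector_right_distrib scaleR_add_left scaleR_add_right
     sum.distrib vec_eq_iff algebra_simps matrix_vector_mult_scaleR scaleR_sum_right)
  done

lemma res_iff:
  "(residual_zero A W q g h G H zb z \<and> (\<forall>i. i \<notin> A \<longrightarrow> pmu z $ i = 0))
    \<longleftrightarrow> Lf A W G H zb (z - (pv zb, 0, 0)) = bf A q g h zb"
  apply (simp add: residual_zero_def Lf_def bf_def Let_def pd_eq vec_eq_iff)
  apply (auto simp: algebra_simps eq_neg_iff_add_eq_0)
  done

lemma Lf_expand: "Lf A W G H x y = (\<Sum>k\<in>Basis. (y \<bullet> k) *\<^sub>R Lf A W G H x k)"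
proof -
  have "Lf A W G H x y = Lf A W G H x (\<Sum>k\<in>Basis. (y \<bullet> k) *\<^sub>R k)"
    by (simp add: euclidean_representation)
  also have "\<dots> = (\<Sum>k\<in>Basis. (y \<bullet> k) *\<^sub>R Lf A W G H x k)"
    by (simp add: linear_sum[OF Lf_linear] linear_scale[OF Lf_linear] o_def)
  finally show ?thesis .
qed

lemma lin_diff: "linear T \<Longrightarrow> F differentiable (at x) \<Longrightarrow> (\<lambda>x. T (F x)) differentiable (at x)"
  for T :: "'a::euclidean_space \<Rightarrow> 'b::real_normed_vector"
  by (rule differentiable_compose[of T]) (auto intro: bounded_linear_imp_differentiable simp: linear_linear)

lemma pv_diff: "pv differentiable (at x)"
proof -
  have "linear (pv :: ('n::finite,'m::finite,'p::finite) pd \<Rightarrow> _)"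
    by (rule linearI) auto
  thus ?thesis by (intro bounded_linear_imp_differentiable) (simp add: linear_linear)
qed

lemma Lf_col_diff:
  fixes W :: "('n::finite,'m::finite,'p::finite) pd \<Rightarrow> real^'n^'n"
    and G :: "real^'n \<Rightarrow> real^'m^'n" and H :: "real^'n \<Rightarrow> real^'p^'n"
  assumes dW: "\<And>x. W differentiable (at x)" and dG: "\<And>v. G differentiable (at v)"
    and dH: "\<And>v. H differentiable (at v)"
  shows "(\<lambda>x. Lf A W G H x k) differentiable (at x)"
proof -
  define T where "T = (\<lambda>(M1::real^'n^'n, M2::real^'m^'n, M3::real^'p^'n).
     (M1 *v pv k + M2 *v plam k + (\<Sum>i\<in>A. pmu k $ i *\<^sub>R column i M3),
      transpose M2 *v pv k, \<chi> i. if i \<in> A then (transpose M3 *v pv k) $ i else 0))"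
  define c where "c = ((0::real^'n),(0::real^'m), \<chi> i. if i \<in> A then 0 else pmu k $ i)"
  have eq: "(\<lambda>x. Lf A W G H x k) = (\<lambda>x. T (W x, G (pv x), H (pv x)) + c)"
    by (auto simp: Lf_def T_def c_def pd_eq vec_eq_iff)
  have lT: "linear T"
    by (rule linearI) (auto simp: T_def vec_eq_iff column_def transpose_def matrix_vector_mult_def
        vector_matrix_mult_def sum.distrib algebra_simps sum_distrib_left)
  have d1: "(\<lambda>x. (W x, G (pv x), H (pv x))) differentiable (at x)"
    by (intro differentiable_Pair dW differentiable_compose[of G pv] differentiable_compose[of H pv] dG dH pv_diff)
  show ?thesis unfolding eq
    by (intro differentiable_add differentiable_const lin_diff[OF lT d1])
qed

lemma bf_diff:
  fixes q :: "('n::finite,'m::finite,'p::finite) pd \<Rightarrow> real^'n"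
    and g :: "real^'n \<Rightarrow> real^'m" and h :: "real^'n \<Rightarrow> real^'p"
  assumes dq: "\<And>x. q differentiable (at x)" and dg: "\<And>v. g differentiable (at v)"
    and dh: "\<And>v. h differentiable (at v)"
  shows "bf A q g h differentiable (at x)"
proof -
  define P where "P = (\<lambda>u::real^'p. \<chi> i. if i \<in> A then - u $ i else 0)"
  have lP: "linear P" by (rule linearI) (auto simp: P_def vec_eq_iff)
  have eq: "bf A q g h = (\<lambda>x. (- q x, - g (pv x), P (h (pv x))))"
    by (auto simp: bf_def P_def)
  show ?thesis unfolding eq
    using pv_diff[of x] by (intro differentiable_Pair differentiable_minus dq lin_diff[OF lP]
       differentiable_compose[of g pv] differentiable_compose[of h pv] dg dh) auto
qed



lemma linear_expand:
  fixes f :: "'a::euclidean_space \<Rightarrow> 'b::real_vector"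
  assumes lin: "linear f"
  shows "f y = (\<Sum>k\<in>Basis. (y \<bullet> k) *\<^sub>R f k)"
proof -
  have "f y = f (\<Sum>k\<in>Basis. (y \<bullet> k) *\<^sub>R k)"
    by (simp add: euclidean_representation)
  also have "\<dots> = (\<Sum>k\<in>Basis. (y \<bullet> k) *\<^sub>R f k)"
    by (simp add: linear_sum[OF lin] linear_scale[OF lin] o_def)
  finally show ?thesis .
qed

lemma inj_near:
  fixes L :: "'a::euclidean_space \<Rightarrow> 'b::euclidean_space \<Rightarrow> 'b"
  assumes lin: "\<And>x. linear (L x)"
    and cont: "\<And>k. continuous_on UNIV (\<lambda>x. L x k)"
    and inj0: "inj (L x0)"
  obtains S where "open S" "x0 \<in> S" "\<And>x. x \<in> S \<Longrightarrow> inj (L x)"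
proof -
  obtain gi where gi: "linear gi" "gi \<circ> L x0 = id"
    using linear_injective_left_inverse[OF lin inj0] by blast
  obtain B where B: "B > 0" "\<And>y. B * norm y \<le> norm (L x0 y)"
    using linear_invertible_bounded_below_pos[OF lin gi] by blast
  define \<delta> where "\<delta> x = (\<Sum>k\<in>Basis. norm (L x k - L x0 k))" for x
  define S where "S = {x. \<delta> x < B}"
  have "continuous_on UNIV \<delta>"
    unfolding \<delta>_def by (intro continuous_intros cont)
  then have "open S" unfolding S_def
    by (rule open_Collect_less) (rule continuous_on_const)
  moreover have "x0 \<in> S" using B by (simp add: S_def \<delta>_def)
  moreover have "inj (L x)" if "x \<in> S" for x
    unfolding linear_injective_0[OF lin]
  proof (intro allI impI)
    fix y assume Ly: "L x y = 0"
    show "y = 0"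
    proof (rule ccontr)
      assume "y \<noteq> 0"
      then have ny: "norm y > 0" by simp
      have "norm (L x0 y) = norm (L x0 y - L x y)" using Ly by simp
      also have "L x0 y - L x y = (\<Sum>k\<in>Basis. (y \<bullet> k) *\<^sub>R (L x0 k - L x k))"
        by (subst linear_expand[OF lin[of x0]], subst linear_expand[OF lin[of x]])
           (simp add: sum_subtractf scaleR_diff_right)
      also have "norm \<dots> \<le> (\<Sum>k\<in>Basis. norm ((y \<bullet> k) *\<^sub>R (L x0 k - L x k)))"
        by (rule norm_sum)
      also have "\<dots> \<le> (\<Sum>k\<in>Basis. norm y * norm (L x k - L x0 k))"
      proof (rule sum_mono)
        fix k :: 'b assume k: "k \<in> Basis"
        have "norm ((y \<bullet> k) *\<^sub>R (L x0 k - L x k)) = \<bar>y \<bullet> k\<bar> * norm (L x k - L x0 k)"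
          by (simp add: norm_minus_commute)
        also have "\<dots> \<le> norm y * norm (L x k - L x0 k)"
          by (rule mult_right_mono[OF Basis_le_norm[OF k]]) simp
        finally show "norm ((y \<bullet> k) *\<^sub>R (L x0 k - L x k)) \<le> norm y * norm (L x k - L x0 k)" .
      qed
      also have "\<dots> = norm y * \<delta> x" by (simp add: \<delta>_def sum_distrib_left)
      also have "\<dots> < norm y * B" using that ny by (simp add: S_def)
      finally have "norm (L x0 y) < B * norm y" by (simp add: mult.commute)
      with B(2)[of y] show False by simp
    qed
  qed
  ultimately show ?thesis using that by blast
qed



lemma inv_family_diff:
  fixes L :: "'a::euclidean_space \<Rightarrow> 'b::euclidean_space \<Rightarrow> 'b" and b :: "'a \<Rightarrow> 'b"
  assumes lin: "\<And>x. linear (L x)"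
    and dL: "\<And>k x. (\<lambda>x. L x k) differentiable (at x)"
    and db: "\<And>x. b differentiable (at x)"
    and S: "open S" "x0 \<in> S"
    and inj: "\<And>x. x \<in> S \<Longrightarrow> inj (L x)"
  shows "(\<lambda>x. inv (L x) (b x)) differentiable (at x0)"
proof -
  have Lexp: "L x y = (\<Sum>k\<in>Basis. (y \<bullet> k) *\<^sub>R L x k)" for x y
  proof -
    have "L x y = L x (\<Sum>k\<in>Basis. (y \<bullet> k) *\<^sub>R k)"
      by (simp add: euclidean_representation)
    also have "\<dots> = (\<Sum>k\<in>Basis. (y \<bullet> k) *\<^sub>R L x k)"
      by (simp add: linear_sum[OF lin] linear_scale[OF lin] o_def)
    finally show ?thesis .
  qed
  have surj: "surj (L x)" if "x \<in> S" for x
    using linear_injective_imp_surjective[OF lin inj[OF that]] by simp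
  define y0 where "y0 = inv (L x0) (b x0)"
  have Ly0: "L x0 y0 = b x0"
    unfolding y0_def using surj[OF S(2)] by (simp add: surj_f_inv_f)
  have "\<forall>k. \<exists>D. ((\<lambda>x. L x k) has_derivative D) (at x0)"
    using dL unfolding differentiable_def by blast
  from choice[OF this] obtain D where D: "\<And>k. ((\<lambda>x. L x k) has_derivative D k) (at x0)"
    by blast
  define Psi where "Psi = (\<lambda>p::'a\<times>'b. (fst p, \<Sum>k\<in>Basis. (snd p \<bullet> k) *\<^sub>R L (fst p) k))"
  define Psi' where "Psi' = (\<lambda>p::'a\<times>'b. (fst p, \<Sum>k\<in>Basis. (y0 \<bullet> k) *\<^sub>R D k (fst p) + (snd p \<bullet> k) *\<^sub>R L x0 k))"
  define N where "N = inv (L x0)"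
  define gi where "gi = (\<lambda>p::'a\<times>'b. (fst p, inv (L (fst p)) (snd p)))"
  define g' where "g' = (\<lambda>p::'a\<times>'b. (fst p, N (snd p - (\<Sum>k\<in>Basis. (y0 \<bullet> k) *\<^sub>R D k (fst p)))))"
  have Psi_eq: "Psi p = (fst p, L (fst p) (snd p))" for p
    unfolding Psi_def by (simp only: Lexp[of "fst p" "snd p"])
  have dk: "((\<lambda>p::'a\<times>'b. L (fst p) k) has_derivative (\<lambda>p. D k (fst p))) (at (x0, y0))" for k
  proof -
    have "(fst has_derivative fst) (at (x0,y0))"
      by (rule bounded_linear_imp_has_derivative[OF bounded_linear_fst])
    from has_derivative_compose[OF this, of "\<lambda>x. L x k" "D k"] D[of k] show ?thesis by simp
  qed
  have dPsi: "(Psi has_derivative Psi') (at (x0, y0))"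
    unfolding Psi_def Psi'_def
    apply (intro has_derivative_Pair has_derivative_fst[OF has_derivative_ident] has_derivative_sum)
    apply (rule has_derivative_eq_rhs)
     apply (rule has_derivative_scaleR[OF has_derivative_inner_left[OF has_derivative_snd[OF has_derivative_ident]] dk])
    apply (auto simp: algebra_simps)
    done
  have dPsi_all: "Psi differentiable (at p)" for p
  proof -
    have "(\<lambda>p::'a\<times>'b. L (fst p) k) differentiable (at p)" for k
      by (rule differentiable_compose[of "\<lambda>x. L x k" fst]) (auto intro: dL bounded_linear_imp_differentiable bounded_linear_fst)
    moreover have "(\<lambda>p::'a\<times>'b. snd p \<bullet> k) differentiable (at p)" for k
      by (rule bounded_linear_imp_differentiable) (intro bounded_linear_inner_left_comp bounded_linear_snd)
    moreover have "(\<lambda>p::'a\<times>'b. fst p) differentiable (at p)"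
      by (rule bounded_linear_imp_differentiable) (rule bounded_linear_fst)
    ultimately show ?thesis unfolding Psi_def
      by (intro differentiable_Pair differentiable_sum ballI finite_Basis differentiable_scaleR) auto
  qed
  have contPsi: "continuous_on (S \<times> UNIV) Psi"
    by (intro continuous_at_imp_continuous_on ballI differentiable_imp_continuous_within dPsi_all)
  have giPsi: "gi (Psi p) = p" if "p \<in> S \<times> UNIV" for p
    using that inj by (auto simp: gi_def Psi_eq inv_f_f)
  have id: "Psi' \<circ> g' = id"
  proof
    fix p :: "'a \<times> 'b"
    have "(\<Sum>k\<in>Basis. (N (snd p - (\<Sum>k\<in>Basis. (y0 \<bullet> k) *\<^sub>R D k (fst p))) \<bullet> k) *\<^sub>R L x0 k)
        = L x0 (N (snd p - (\<Sum>k\<in>Basis. (y0 \<bullet> k) *\<^sub>R D k (fst p))))"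
      by (rule Lexp[symmetric])
    also have "\<dots> = snd p - (\<Sum>k\<in>Basis. (y0 \<bullet> k) *\<^sub>R D k (fst p))"
      unfolding N_def using surj[OF S(2)] by (simp add: surj_f_inv_f)
    finally show "(Psi' \<circ> g') p = id p"
      by (simp add: Psi'_def g'_def sum.distrib)
  qed
  have "(gi has_derivative g') (at (Psi (x0, y0)))"
    by (rule has_derivative_inverse_strong[OF _ _ contPsi giPsi dPsi id])
       (use S in \<open>auto intro: open_Times\<close>)
  then have dgi: "gi differentiable (at (x0, b x0))"
    by (auto simp: differentiable_def Psi_eq Ly0)
  have "(\<lambda>x. (x, b x)) differentiable (at x0)"
    by (intro differentiable_Pair db differentiable_ident)
  then have "(\<lambda>x. gi (x, b x)) differentiable (at x0)"
    by (rule differentiable_compose[of gi "\<lambda>x. (x, b x)", OF dgi])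
  then have "(\<lambda>x. snd (gi (x, b x))) differentiable (at x0)"
    by (rule differentiable_compose[of snd, OF bounded_linear_imp_differentiable[OF bounded_linear_snd]])
  then show ?thesis by (simp add: gi_def)
qed


lemma Hsum:
  fixes M :: "real^'p::finite^'n::finite" and mu :: "real^'p"
  assumes "\<forall>i. i \<notin> A \<longrightarrow> mu $ i = 0"
  shows "M *v mu = (\<Sum>i\<in>A. mu $ i *\<^sub>R column i M)"
proof -
  have "M *v mu = (\<Sum>i\<in>UNIV. mu $ i *\<^sub>R column i M)"
    by (simp add: matrix_mult_sum scalar_mult_eq_scaleR)
  also have "\<dots> = (\<Sum>i\<in>A. mu $ i *\<^sub>R column i M)"
    by (rule sum.mono_neutral_right) (use assms in auto)
  finally show ?thesis .
qed

lemma dot_col: "(d::real^'n::finite) \<bullet> column i (M::real^'p::finite^'n) = (d v* M) $ i"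
  by (simp add: inner_vec_def column_def vector_matrix_mult_def mult.commute)

lemma diffc: "(\<And>x. f differentiable (at x)) \<Longrightarrow> continuous_on UNIV f"
  by (intro continuous_at_imp_continuous_on ballI differentiable_imp_continuous_within) auto


theorem lemma1:
  fixes W :: "('n::finite,'m::finite,'p::finite) pd \<Rightarrow> real^'n^'n"
    and q :: "('n,'m,'p) pd \<Rightarrow> real^'n"
    and g :: "real^'n \<Rightarrow> real^'m" and h :: "real^'n \<Rightarrow> real^'p"
    and G :: "real^'n \<Rightarrow> real^'m^'n" and H :: "real^'n \<Rightarrow> real^'p^'n"
    and zs :: "('n,'m,'p) pd"
  assumes smooth_g: "C2_map g" and smooth_h: "C2_map h"
    and smooth_W: "C1_map W" and smooth_q: "C1_map q"
    and smooth_G: "C1_map G" and smooth_H: "C1_map H"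
    and W_psd: "\<And>z d. d \<bullet> (W z *v d) \<ge> 0"
    and fixed: "qp_kkt W q g h G H zs zs"
    and LICQ: "\<And>a b. G (pv zs) *v a + (\<Sum>i\<in>{i. h (pv zs) $ i = 0}. b i *\<^sub>R column i (H (pv zs))) = 0
                 \<Longrightarrow> a = 0 \<and> (\<forall>i. h (pv zs) $ i = 0 \<longrightarrow> b i = 0)"
    and strict_compl: "\<And>i. h (pv zs) $ i = 0 \<Longrightarrow> pmu zs $ i > 0"
    and SOSC: "\<And>d. d \<noteq> 0 \<Longrightarrow> transpose (G (pv zs)) *v d = 0
                 \<Longrightarrow> (\<forall>i. h (pv zs) $ i = 0 \<and> pmu zs $ i > 0 \<longrightarrow> (transpose (H (pv zs)) *v d) $ i = 0)
                 \<Longrightarrow> (\<forall>i. h (pv zs) $ i = 0 \<and> pmu zs $ i = 0 \<longrightarrow> (transpose (H (pv zs)) *v d) $ i \<le> 0)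
                 \<Longrightarrow> d \<bullet> (W zs *v d) > 0"
  defines "A \<equiv> {i. h (pv zs) $ i = 0 \<and> pmu zs $ i > 0}"
  shows "\<exists>U V \<pi>. open U \<and> zs \<in> U \<and> open V \<and> zs \<in> V \<and> \<pi> zs = zs
           \<and> (\<forall>zb\<in>U. \<pi> zb \<in> V)
           \<and> (\<forall>zb\<in>U. \<forall>z\<in>V. qp_kkt W q g h G H zb z \<longleftrightarrow> z = \<pi> zb)
           \<and> (\<forall>zb\<in>U. \<forall>z\<in>V. (residual_zero A W q g h G H zb z \<and> (\<forall>i. i \<notin> A \<longrightarrow> pmu z $ i = 0))
                                 \<longleftrightarrow> z = \<pi> zb)
           \<and> (\<forall>zb\<in>U. \<pi> differentiable (at zb))"
proof -
  have dW: "\<And>x. W differentiable (at x)"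
    using smooth_W unfolding C1_map_def by (auto intro: differentiableI)
  have dq: "\<And>x. q differentiable (at x)"
    using smooth_q unfolding C1_map_def by (auto intro: differentiableI)
  have dG: "\<And>x. G differentiable (at x)"
    using smooth_G unfolding C1_map_def by (auto intro: differentiableI)
  have dH: "\<And>x. H differentiable (at x)"
    using smooth_H unfolding C1_map_def by (auto intro: differentiableI)
  have dg: "\<And>x. g differentiable (at x)"
    using smooth_g unfolding C2_map_def by (auto intro: differentiableI)
  have dh: "\<And>x. h differentiable (at x)"
    using smooth_h unfolding C2_map_def by (auto intro: differentiableI)
  define L where "L = Lf A W G H"
  define b where "b = bf A q g h"
  have linL: "\<And>x. linear (L x)" by (simp add: L_def Lf_linear)
  have dL: "\<And>k x. (\<lambda>x. L x k) differentiable (at x)"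
    unfolding L_def by (rule Lf_col_diff[OF dW dG dH])
  have db: "\<And>x. b differentiable (at x)"
    unfolding b_def by (rule bf_diff[OF dq dg dh])
  have contL: "\<And>k. continuous_on UNIV (\<lambda>x. L x k)"
    by (rule diffc[OF dL])
  define vs where "vs = pv zs"
  have Aeq: "{i. h vs $ i = 0} = A"
    using strict_compl by (auto simp: A_def vs_def)
  have F1: "q zs + G vs *v plam zs + H vs *v pmu zs = 0"
   and F2: "g vs = 0" and F3: "\<And>i. h vs $ i \<le> 0" and F4: "\<And>i. pmu zs $ i \<ge> 0"
   and F5: "\<And>i. pmu zs $ i * h vs $ i = 0"
    using fixed by (auto simp: qp_kkt_def Let_def vs_def)
  have hneg: "h vs $ i < 0" if "i \<notin> A" for i
    using F3[of i] that Aeq by (metis le_less mem_Collect_eq)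
  have mu0: "pmu zs $ i = 0" if "i \<notin> A" for i
    using F5[of i] hneg[OF that] by simp
  have inj0: "inj (L zs)"
    unfolding linear_injective_0[OF linL]
  proof (intro allI impI)
    fix y assume Ly: "L zs y = 0"
    define d where "d = pv y"
    define la where "la = plam y"
    define mu where "mu = pmu y"
    have "pv (L zs y) = 0" "plam (L zs y) = 0" "pmu (L zs y) = 0" using Ly by simp_all
    then have e1: "W zs *v d + G vs *v la + (\<Sum>i\<in>A. mu $ i *\<^sub>R column i (H vs)) = 0"
      and e2: "d v* G vs = 0"
      by (simp_all add: L_def Lf_def d_def la_def mu_def vs_def)
    have e3: "(if i \<in> A then (transpose (H vs) *v d) $ i else mu $ i) = 0" for i
      using arg_cong[OF \<open>pmu (L zs y) = 0\<close>, of "\<lambda>v. v $ i"]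
      by (simp only: L_def Lf_def d_def mu_def vs_def pd_simps vec_lambda_beta zero_index)
    have e3a: "(d v* H vs) $ i = 0" if "i \<in> A" for i
      using e3[of i] that by (simp only: if_True transpose_matrix_vector)
    have e3b: "mu $ i = 0" if "i \<notin> A" for i using e3[of i] that by simp
    have s1: "d \<bullet> (G vs *v la) = 0"
      by (simp add: dot_lmul_matrix[symmetric] e2)
    have s2: "d \<bullet> (\<Sum>i\<in>A. mu $ i *\<^sub>R column i (H vs)) = 0"
      by (simp add: inner_sum_right dot_col e3a)
    have "W zs *v d = - (G vs *v la) - (\<Sum>i\<in>A. mu $ i *\<^sub>R column i (H vs))"
      using e1 by (simp add: algebra_simps eq_neg_iff_add_eq_0)
    then have dWd: "d \<bullet> (W zs *v d) = 0"
      by (simp add: inner_diff_right s1 s2)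
    have d0: "d = 0"
    proof (rule ccontr)
      assume "d \<noteq> 0"
      moreover have "transpose (G (pv zs)) *v d = 0" using e2 by (simp add: vs_def)
      moreover have "\<forall>i. h (pv zs) $ i = 0 \<and> pmu zs $ i > 0 \<longrightarrow> (transpose (H (pv zs)) *v d) $ i = 0"
        using e3a by (simp add: A_def vs_def)
      moreover have "\<forall>i. h (pv zs) $ i = 0 \<and> pmu zs $ i = 0 \<longrightarrow> (transpose (H (pv zs)) *v d) $ i \<le> 0"
        using strict_compl by fastforce
      ultimately have "d \<bullet> (W zs *v d) > 0" by (rule SOSC)
      with dWd show False by simp
    qed
    have "G (pv zs) *v la + (\<Sum>i\<in>{i. h (pv zs) $ i = 0}. mu $ i *\<^sub>R column i (H (pv zs))) = 0"
      using e1 d0 Aeq by (simp add: vs_def)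
    from LICQ[OF this] have la0: "la = 0" and muA: "\<And>i. h (pv zs) $ i = 0 \<Longrightarrow> mu $ i = 0"
      by auto
    have "mu = 0" unfolding vec_eq_iff
    proof
      fix i show "mu $ i = 0 $ i"
        using muA[of i] e3b[of i] by (cases "i \<in> A") (auto simp: A_def)
    qed
    then show "y = 0" using d0 la0 by (simp add: pd_eq d_def la_def mu_def)
  qed
  obtain S0 where S0: "open S0" "zs \<in> S0" "\<And>x. x \<in> S0 \<Longrightarrow> inj (L x)"
    using inj_near[OF linL contL inj0] by blast
  have surjL: "surj (L x)" if "x \<in> S0" for x
    using linear_injective_imp_surjective[OF linL S0(3)[OF that]] by simp
  define pm where "pm = (\<lambda>x. (pv x, 0::real^'m, 0::real^'p) + inv (L x) (b x))"
  have pm_iff: "(residual_zero A W q g h G H x z \<and> (\<forall>i. i \<notin> A \<longrightarrow> pmu z $ i = 0)) \<longleftrightarrow> z = pm x"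
    if "x \<in> S0" for x z
  proof -
    have "(residual_zero A W q g h G H x z \<and> (\<forall>i. i \<notin> A \<longrightarrow> pmu z $ i = 0))
       \<longleftrightarrow> L x (z - (pv x, 0, 0)) = b x"
      unfolding L_def b_def by (rule res_iff)
    also have "\<dots> \<longleftrightarrow> z - (pv x, 0, 0) = inv (L x) (b x)"
      using S0(3)[OF that] surjL[OF that]
      by (metis inv_f_f surj_f_inv_f)
    also have "\<dots> \<longleftrightarrow> z = pm x"
      by (auto simp: pm_def algebra_simps)
    finally show ?thesis .
  qed
  have dpm: "pm differentiable (at x)" if "x \<in> S0" for x
    unfolding pm_def
    by (intro differentiable_add differentiable_Pair pv_diff differentiable_const
        inv_family_diff[OF linL dL db S0(1) that S0(3)])
  have contpm: "continuous_on S0 pm"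
    by (intro continuous_at_imp_continuous_on ballI differentiable_imp_continuous_within dpm)
  have pmzs: "pm zs = zs"
  proof -
    have off: "\<forall>i. i \<notin> A \<longrightarrow> pmu zs $ i = 0" using mu0 by blast
    have "residual_zero A W q g h G H zs zs"
      using F1 F2 Hsum[OF off, of "H vs"] by (simp add: residual_zero_def Let_def A_def vs_def)
    with off show ?thesis using pm_iff[OF S0(2), of zs] by simp
  qed
  define hl where "hl = (\<lambda>(zb::('n,'m,'p) pd) (z::('n,'m,'p) pd) i. (h (pv zb) + transpose (H (pv zb)) *v (pv z - pv zb)) $ i)"
  define Oset where "Oset = {p. \<forall>i\<in>-A. hl (fst p) (snd p) i < 0}"
  have "open Oset"
  proof -
    have pvf: "pv = (fst :: ('n,'m,'p) pd \<Rightarrow> _)" by (rule ext) (simp add: pv_def)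
    have ch: "continuous_on UNIV (\<lambda>p::('n,'m,'p) pd \<times> ('n,'m,'p) pd. h (pv (fst p)))"
      by (rule continuous_on_compose2[OF diffc[OF dh]]) (auto simp: pvf intro!: continuous_on_fst continuous_on_snd continuous_on_id continuous_on_diff)
    have cH: "continuous_on UNIV (\<lambda>p::('n,'m,'p) pd \<times> ('n,'m,'p) pd. H (pv (fst p)))"
      by (rule continuous_on_compose2[OF diffc[OF dH]]) (auto simp: pvf intro!: continuous_on_fst continuous_on_snd continuous_on_id continuous_on_diff)
    have cd: "continuous_on UNIV (\<lambda>p::('n,'m,'p) pd \<times> ('n,'m,'p) pd. pv (snd p) - pv (fst p))"
      by (auto simp: pvf intro!: continuous_on_fst continuous_on_snd continuous_on_id continuous_on_diff)
    have eq: "hl (fst p) (snd p) i = h (pv (fst p)) $ i + (\<Sum>j\<in>UNIV. H (pv (fst p)) $ j $ i * (pv (snd p) - pv (fst p)) $ j)"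
      for p i by (simp add: hl_def vector_matrix_mult_def mult.commute)
    have "Oset = (\<Inter>i\<in>-A. {p. hl (fst p) (snd p) i < 0})" by (auto simp: Oset_def)
    also have "open \<dots>"
    proof (intro open_INT ballI finite_subset[OF subset_UNIV finite_class.finite_UNIV])
      fix i
      have "continuous_on UNIV (\<lambda>p::('n,'m,'p) pd \<times> ('n,'m,'p) pd. hl (fst p) (snd p) i)"
        unfolding eq by (intro continuous_intros continuous_on_component ch cH cd)
      then show "open {p::('n,'m,'p) pd \<times> ('n,'m,'p) pd. hl (fst p) (snd p) i < 0}"
        by (rule open_Collect_less[OF _ continuous_on_const])
    qed
    finally show ?thesis .
  qed
  moreover have "(zs, zs) \<in> Oset"
    using hneg by (simp add: Oset_def hl_def vs_def)
  ultimately obtain U1 V1 where UV1: "open U1" "open V1" "(zs, zs) \<in> U1 \<times> V1" "U1 \<times> V1 \<subseteq> Oset"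
    by (rule open_prod_elim)
  define V where "V = V1 \<inter> {z. \<forall>i\<in>A. pmu z $ i > 0}"
  have "open V"
  proof -
    have pmf: "pmu = (\<lambda>z::('n,'m,'p) pd. snd (snd z))" by (rule ext) (simp add: pmu_def)
    have "{z::('n,'m,'p) pd. \<forall>i\<in>A. pmu z $ i > 0} = (\<Inter>i\<in>A. {z. 0 < pmu z $ i})" by auto
    also have "open \<dots>"
    proof (intro open_INT ballI finite_subset[OF subset_UNIV finite_class.finite_UNIV])
      fix i
      have "continuous_on UNIV (\<lambda>z::('n,'m,'p) pd. pmu z $ i)"
        unfolding pmf by (intro continuous_intros)
      then show "open {z::('n,'m,'p) pd. 0 < pmu z $ i}"
        by (rule open_Collect_less[OF continuous_on_const])
    qed
    finally show ?thesis using UV1(2) by (simp add: V_def open_Int)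
  qed
  have zsV: "zs \<in> V"
    using UV1(3) by (auto simp: V_def A_def)
  define U where "U = U1 \<inter> (S0 \<inter> pm -` V)"
  have "open U"
    unfolding U_def using continuous_open_preimage[OF contpm S0(1) \<open>open V\<close>] UV1(1) by blast
  have zsU: "zs \<in> U"
    using UV1(3) S0(2) pmzs zsV by (simp add: U_def)
  have kkt_iff: "qp_kkt W q g h G H zb z \<longleftrightarrow> z = pm zb" if "zb \<in> U" "z \<in> V" for zb z
  proof -
    have zbS: "zb \<in> S0" and pmV: "pm zb \<in> V" using that(1) by (auto simp: U_def)
    have zpos: "\<And>i. i \<in> A \<Longrightarrow> pmu z $ i > 0" using that(2) by (auto simp: V_def)
    have "(zb, z) \<in> Oset" using that UV1(4) by (auto simp: U_def V_def)
    then have hlneg: "\<And>i. i \<notin> A \<Longrightarrow> hl zb z i < 0" by (auto simp: Oset_def)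
    have kkt: "qp_kkt W q g h G H zb z \<longleftrightarrow>
      (W zb *v (pv z - pv zb) + q zb + G (pv zb) *v plam z + H (pv zb) *v pmu z = 0
       \<and> g (pv zb) + transpose (G (pv zb)) *v (pv z - pv zb) = 0
       \<and> (\<forall>i. hl zb z i \<le> 0) \<and> (\<forall>i. pmu z $ i \<ge> 0) \<and> (\<forall>i. pmu z $ i * hl zb z i = 0))"
      by (simp add: qp_kkt_def Let_def hl_def)
    have res: "residual_zero A W q g h G H zb z \<longleftrightarrow>
      (W zb *v (pv z - pv zb) + q zb + G (pv zb) *v plam z + (\<Sum>i\<in>A. pmu z $ i *\<^sub>R column i (H (pv zb))) = 0
       \<and> g (pv zb) + transpose (G (pv zb)) *v (pv z - pv zb) = 0
       \<and> (\<forall>i\<in>A. hl zb z i = 0))"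
      by (simp add: residual_zero_def Let_def hl_def)
    show ?thesis
    proof
      assume K: "qp_kkt W q g h G H zb z"
      have off: "\<forall>i. i \<notin> A \<longrightarrow> pmu z $ i = 0"
        using K hlneg unfolding kkt by (metis mult_eq_0_iff less_irrefl)
      have onA: "\<forall>i\<in>A. hl zb z i = 0"
        using K zpos unfolding kkt by (metis mult_eq_0_iff less_irrefl)
      have "residual_zero A W q g h G H zb z"
        using K onA Hsum[OF off, of "H (pv zb)"] unfolding kkt res by simp
      with off show "z = pm zb" using pm_iff[OF zbS] by blast
    next
      assume "z = pm zb"
      then have R: "residual_zero A W q g h G H zb z" and off: "\<forall>i. i \<notin> A \<longrightarrow> pmu z $ i = 0"
        using pm_iff[OF zbS, of z] by auto
      have onA: "\<forall>i\<in>A. hl zb z i = 0" using R unfolding res by blast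
      have c3: "\<forall>i. hl zb z i \<le> 0"
        using onA hlneg by (metis less_imp_le order_refl)
      have c4: "\<forall>i. pmu z $ i \<ge> 0"
        using off zpos by (metis less_imp_le order_refl)
      have c5: "\<forall>i. pmu z $ i * hl zb z i = 0"
        using off onA by (metis mult_zero_left mult_zero_right)
      show "qp_kkt W q g h G H zb z"
        using R c3 c4 c5 Hsum[OF off, of "H (pv zb)"] unfolding kkt res by simp
    qed
  qed
  show ?thesis
    apply (rule exI[of _ U], rule exI[of _ V], rule exI[of _ pm])
    using \<open>open U\<close> zsU \<open>open V\<close> zsV pmzs kkt_iff pm_iff dpm
    by (auto simp: U_def)
qed
end
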